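(* Let $I\subset G$ be a subgroup and $\mathrm{N}I=\sum_{g\in I}g\in\mathcal{O}[G]$. Then $\mathcal{O}[G]/(\mathrm{N}I)\cong R_\Psi$ with $\Psi=\{\psi\in\hat G:\psi(I)\neq1\}$; more precisely, the kernel of the canonical surjection $\mathcal{O}[G]\to R_\Psi$ is the ideal generated by $\mathrm{N}I$.
   Context: $G$ is a finite abelian group, $p$ an odd prime, and $\mathcal{O}$ a finite extension of $\mathbf{Z}_p$ containing all values of all characters $G\to\overline{\mathbf{Q}}_p^*$; $\hat G$ is the set of such characters. For a subset $\Psi\subset\hat G$, $R_\Psi$ denotes the image of the $\mathcal O$-algebra map $\mathcal{O}[G]\to\prod_{\psi\in\Psi}\mathcal{O}$, $x\mapsto(\psi(x))_{\psi\in\Psi}$. *)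

theory Defs
  imports "HOL-Algebra.Group" "HOL-Computational_Algebra.Primes"
begin

definition group_ring :: "('g, 'b) monoid_scheme \<Rightarrow> ('g \<Rightarrow> 'o::comm_ring_1) set" where
  "group_ring G = {x. \<forall>g. g \<notin> carrier G \<longrightarrow> x g = 0}"

definition gr_mult :: "('g, 'b) monoid_scheme \<Rightarrow> ('g \<Rightarrow> 'o::comm_ring_1) \<Rightarrow> ('g \<Rightarrow> 'o) \<Rightarrow> ('g \<Rightarrow> 'o)" where
  "gr_mult G x y = (\<lambda>g. if g \<in> carrier G
      then (\<Sum>h\<in>carrier G. x h * y (inv\<^bsub>G\<^esub> h \<otimes>\<^bsub>G\<^esub> g)) else 0)"

definition norm_elem :: "'g set \<Rightarrow> ('g \<Rightarrow> 'o::comm_ring_1)" where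
  "norm_elem I = (\<lambda>g. if g \<in> I then 1 else 0)"

text \<open>Principal ideal of O[G] generated by z (O[G] is commutative here).\<close>
definition gr_principal_ideal :: "('g, 'b) monoid_scheme \<Rightarrow> ('g \<Rightarrow> 'o::comm_ring_1) \<Rightarrow> ('g \<Rightarrow> 'o) set" where
  "gr_principal_ideal G z = {gr_mult G y z | y. y \<in> group_ring G}"

definition characters :: "('g, 'b) monoid_scheme \<Rightarrow> ('g \<Rightarrow> 'o::comm_ring_1) set" where
  "characters G = {\<psi>. \<psi> \<one>\<^bsub>G\<^esub> = 1 \<and>
      (\<forall>g\<in>carrier G. \<forall>h\<in>carrier G. \<psi> (g \<otimes>\<^bsub>G\<^esub> h) = \<psi> g * \<psi> h) \<and>
      (\<forall>g. g \<notin> carrier G \<longrightarrow> \<psi> g = 0)}"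

definition char_eval :: "('g, 'b) monoid_scheme \<Rightarrow> ('g \<Rightarrow> 'o::comm_ring_1) \<Rightarrow> ('g \<Rightarrow> 'o) \<Rightarrow> 'o" where
  "char_eval G \<psi> x = (\<Sum>g\<in>carrier G. x g * \<psi> g)"

text \<open>Kernel of the map O[G] \<rightarrow> prod_{psi in Psi} O, x \<mapsto> (psi(x))_psi.\<close>
definition char_kernel :: "('g, 'b) monoid_scheme \<Rightarrow> ('g \<Rightarrow> 'o::comm_ring_1) set \<Rightarrow> ('g \<Rightarrow> 'o) set" where
  "char_kernel G \<Psi> = {x \<in> group_ring G. \<forall>\<psi>\<in>\<Psi>. char_eval G \<psi> x = 0}"

definition group_exponent :: "('g, 'b) monoid_scheme \<Rightarrow> nat" where
  "group_exponent G = (LEAST n. 0 < n \<and> (\<forall>g\<in>carrier G. g [^]\<^bsub>G\<^esub> n = \<one>\<^bsub>G\<^esub>))"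

end

theory Submission
  imports Defs "HOL-Computational_Algebra.Polynomial" "HOL-Algebra.FiniteProduct"
begin

definition lchar :: "('g, 'b) monoid_scheme \<Rightarrow> nat \<Rightarrow> 'g set \<Rightarrow> ('g \<Rightarrow> nat) \<Rightarrow> bool" where
  "lchar G e H l \<longleftrightarrow> (\<forall>x\<in>H. \<forall>y\<in>H. l (x \<otimes>\<^bsub>G\<^esub> y) mod e = (l x + l y) mod e)"

lemma mod_double_eq: fixes a e :: nat assumes "0 < e" "(a + a) mod e = a mod e" shows "a mod e = 0"
proof -
  define r where "r = a mod e"
  have r: "r < e" using assms r_def by simp
  have "(r + r) mod e = r" using assms(2) r_def by (simp add: mod_add_eq)
  then show ?thesis using r unfolding r_def[symmetric]
    by (cases "r + r < e") (auto simp: mod_if split: if_split_asm)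
qed

locale expo_grp = comm_group +
  fixes e :: nat
  assumes fin: "finite (carrier G)" and e_pos: "0 < e"
    and e_pow: "\<And>g. g \<in> carrier G \<Longrightarrow> g [^] e = \<one>"
begin

lemma lchar_one:
  assumes "subgroup H G" "lchar G e H l" shows "l \<one> mod e = 0"
proof -
  have "\<one> \<in> H" using assms(1) subgroup.one_closed by blast
  then have "l (\<one> \<otimes> \<one>) mod e = (l \<one> + l \<one>) mod e" using assms(2) unfolding lchar_def by blast
  then have *: "(l \<one> + l \<one>) mod e = l \<one> mod e" by simp
  show ?thesis by (rule mod_double_eq[OF e_pos *])
qed

lemma sub_pow_closed: assumes "subgroup H G" "x \<in> H" shows "x [^] (j::nat) \<in> H"
  using assms by (induction j) (auto simp: subgroup.m_closed subgroup.one_closed)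

lemma lchar_pow:
  assumes "subgroup H G" "lchar G e H l" "x \<in> H" shows "l (x [^] (j::nat)) mod e = (j * l x) mod e"
proof (induction j)
  case 0 then show ?case using lchar_one[OF assms(1,2)] by simp
next
  case (Suc j)
  have xj: "x [^] j \<in> H" using sub_pow_closed assms by blast
  have "l (x [^] Suc j) mod e = (l (x [^] j) + l x) mod e"
    using assms(2) xj assms(3) unfolding lchar_def by simp
  also have "\<dots> = (j * l x + l x) mod e" using Suc by (metis mod_add_left_eq)
  finally show ?case by (simp add: add.commute)
qed

lemma swap4: "x \<in> carrier G \<Longrightarrow> y \<in> carrier G \<Longrightarrow> z \<in> carrier G \<Longrightarrow> w \<in> carrier G \<Longrightarrow>
  (x \<otimes> y) \<otimes> (z \<otimes> w) = (x \<otimes> z) \<otimes> (y \<otimes> w)"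
  by (simp add: m_assoc m_lcomm)

lemma least_props:
  assumes H: "subgroup H G" and a: "a \<in> carrier G" "a \<notin> H"
    and m_def: "m = (LEAST m. 0 < m \<and> a [^] m \<in> H)"
  shows "0 < m" "a [^] m \<in> H" "\<And>k. 0 < k \<Longrightarrow> k < m \<Longrightarrow> a [^] k \<notin> H" "1 < m" "m dvd e"
proof -
  have ex: "0 < e \<and> a [^] e \<in> H" using e_pos e_pow[OF a(1)] subgroup.one_closed[OF H] by simp
  show m0: "0 < m" and am: "a [^] m \<in> H" using LeastI[of "\<lambda>m. 0 < m \<and> a [^] m \<in> H", OF ex] m_def by auto
  show mn: "\<And>k. 0 < k \<Longrightarrow> k < m \<Longrightarrow> a [^] k \<notin> H" using not_less_Least m_def by blast
  show "1 < m" using m0 am a by (cases "m = 1") auto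
  define q where "q = e div m"
  define r where "r = e mod m"
  have er: "e = m * q + r" using q_def r_def by simp
  have amq: "(a [^] m) [^] q \<in> H" using sub_pow_closed[OF H am] .
  have "a [^] e = (a [^] m) [^] q \<otimes> a [^] r" using er a(1) by (simp add: nat_pow_mult nat_pow_pow)
  then have "(a [^] m) [^] q \<otimes> a [^] r = \<one>" using e_pow[OF a(1)] by simp
  then have "a [^] r \<otimes> (a [^] m) [^] q = \<one>" using a(1) by (simp add: m_comm)
  then have "inv ((a [^] m) [^] q) = a [^] r" by (rule inv_equality) (use a(1) in simp_all)
  then have "a [^] r = inv ((a [^] m) [^] q)" by simp
  then have "a [^] r \<in> H" using amq H by (simp add: subgroup.m_inv_closed)
  moreover have "r < m" using r_def m0 by simp
  ultimately have "r = 0" using mn by blast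
  then show "m dvd e" using r_def by auto
qed

lemma step:
  assumes H: "subgroup H G" and l: "lchar G e H l" and a: "a \<in> carrier G" "a \<notin> H"
    and m_def: "m = (LEAST m. 0 < m \<and> a [^] m \<in> H)"
    and c: "(m * c) mod e = l (a [^] m) mod e"
  shows "\<exists>H' l'. subgroup H' G \<and> H \<subset> H' \<and> a \<in> H' \<and> lchar G e H' l' \<and> (\<forall>h\<in>H. l' h mod e = l h mod e)
           \<and> l' a mod e = c mod e"
proof -
  note mp = least_props[OF H a m_def]
  have Hc: "\<And>h. h \<in> H \<Longrightarrow> h \<in> carrier G" using subgroup.mem_carrier[OF H] .
  have am: "a [^] m \<in> H" by (rule mp(2))
  define H' where "H' = {h \<otimes> a [^] j | h j. h \<in> H \<and> j < m}"
  define rep where "rep g = (SOME p. fst p \<in> H \<and> snd p < m \<and> g = fst p \<otimes> a [^] snd p)" for g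
  define l' where "l' g = l (fst (rep g)) + snd (rep g) * c" for g
  have uniq0: "h1 = h2 \<and> j1 = j2" if "h1 \<in> H" "h2 \<in> H" "j1 < m" "j2 < m" "j1 \<le> j2"
     "h1 \<otimes> a [^] j1 = h2 \<otimes> a [^] j2" for h1 h2 j1 j2
  proof -
    have "a [^] j2 = a [^] (j2 - j1) \<otimes> a [^] j1" using that(5) a(1) by (simp add: nat_pow_mult)
    then have "h1 \<otimes> a [^] j1 = (h2 \<otimes> a [^] (j2 - j1)) \<otimes> a [^] j1"
      using that(6) a(1) Hc that(2) by (simp add: m_assoc)
    then have e1: "h1 = h2 \<otimes> a [^] (j2 - j1)" using a(1) Hc that(1,2) by simp
    then have "a [^] (j2 - j1) = inv h2 \<otimes> h1" using a(1) Hc that(1,2) by (simp add: inv_solve_left)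
    then have "a [^] (j2 - j1) \<in> H" using H that(1,2) by (simp add: subgroup.m_closed subgroup.m_inv_closed)
    then have "j2 - j1 = 0" using mp(3)[of "j2 - j1"] that(4) by linarith
    then show ?thesis using e1 that(5) Hc that(2) by simp
  qed
  have uniq: "h1 = h2 \<and> j1 = j2" if "h1 \<in> H" "h2 \<in> H" "j1 < m" "j2 < m"
     "h1 \<otimes> a [^] j1 = h2 \<otimes> a [^] j2" for h1 h2 j1 j2
  proof (cases "j1 \<le> j2")
    case True then show ?thesis using uniq0 that by blast
  next
    case False then show ?thesis using uniq0[of h2 h1 j2 j1] that by auto
  qed
  have l'_eq: "l' (h \<otimes> a [^] j) = l h + j * c" if "h \<in> H" "j < m" for h j
  proof -
    let ?P = "\<lambda>p. fst p \<in> H \<and> snd p < m \<and> h \<otimes> a [^] j = fst p \<otimes> a [^] snd p"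
    have "?P (h, j)" using that by simp
    then have "?P (rep (h \<otimes> a [^] j))" unfolding rep_def by (rule someI)
    then have "fst (rep (h \<otimes> a [^] j)) = h \<and> snd (rep (h \<otimes> a [^] j)) = j"
      using uniq that by metis
    then show ?thesis unfolding l'_def by simp
  qed
  have H'c: "H' \<subseteq> carrier G" unfolding H'_def using Hc a(1) by auto
  have mult: "(h1 \<otimes> a [^] j1) \<otimes> (h2 \<otimes> a [^] j2) = (h1 \<otimes> h2) \<otimes> a [^] (j1 + j2)"
    if "h1 \<in> H" "h2 \<in> H" for h1 h2 and j1 j2 :: nat
  proof -
    have c1: "h1 \<in> carrier G" "h2 \<in> carrier G" using that Hc by auto
    have "(h1 \<otimes> a [^] j1) \<otimes> (h2 \<otimes> a [^] j2) = (h1 \<otimes> h2) \<otimes> (a [^] j1 \<otimes> a [^] j2)"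
      using c1 a(1) by (simp add: swap4)
    then show ?thesis using a(1) by (simp add: nat_pow_mult)
  qed
  have wrap: "(h1 \<otimes> h2) \<otimes> a [^] (j1 + j2) = (h1 \<otimes> h2 \<otimes> a [^] m) \<otimes> a [^] (j1 + j2 - m)"
    if "h1 \<in> H" "h2 \<in> H" "m \<le> j1 + j2" for h1 h2 and j1 j2 :: nat
  proof -
    have "a [^] (j1 + j2) = a [^] m \<otimes> a [^] (j1 + j2 - m)" using that(3) a(1) by (simp add: nat_pow_mult)
    then show ?thesis using that Hc a(1) by (simp add: m_assoc)
  qed
  have sub: "subgroup H' G"
  proof (rule subgroupI)
    show "H' \<subseteq> carrier G" by (rule H'c)
    show "H' \<noteq> {}" unfolding H'_def using mp(1) subgroup.one_closed[OF H] by blast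
  next
    fix g assume "g \<in> H'"
    then obtain h j where hj: "h \<in> H" "j < m" "g = h \<otimes> a [^] j" unfolding H'_def by blast
    show "inv g \<in> H'"
    proof (cases "j = 0")
      case True
      then have "inv g = inv h \<otimes> a [^] (0::nat)" using hj Hc by simp
      moreover have "inv h \<in> H" using hj H by (simp add: subgroup.m_inv_closed)
      ultimately show ?thesis unfolding H'_def using mp(1) by blast
    next
      case False
      have "a [^] m = a [^] j \<otimes> a [^] (m - j)" using hj(2) a(1) by (simp add: nat_pow_mult)
      have hc: "h \<in> carrier G" using hj Hc by blast
      have amj: "a [^] (m - j) \<otimes> a [^] j = a [^] m" using hj(2) a(1) by (simp add: nat_pow_mult)
      have "(inv h \<otimes> inv (a [^] m) \<otimes> a [^] (m - j)) \<otimes> g = (inv h \<otimes> inv (a [^] m)) \<otimes> (a [^] (m - j) \<otimes> (h \<otimes> a [^] j))"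
        using hj(3) hc a(1) by (simp add: m_assoc)
      also have "\<dots> = (inv h \<otimes> inv (a [^] m)) \<otimes> (h \<otimes> (a [^] (m - j) \<otimes> a [^] j))"
        using hc a(1) by (simp add: m_lcomm)
      also have "\<dots> = (inv h \<otimes> inv (a [^] m)) \<otimes> (h \<otimes> a [^] m)" using amj by simp
      also have "\<dots> = (inv h \<otimes> h) \<otimes> (inv (a [^] m) \<otimes> a [^] m)" using hc a(1) by (simp add: swap4)
      also have "\<dots> = \<one>" using hc a(1) by simp
      finally have "(inv h \<otimes> inv (a [^] m) \<otimes> a [^] (m - j)) \<otimes> g = \<one>" .
      then have "inv g = inv h \<otimes> inv (a [^] m) \<otimes> a [^] (m - j)"
        using hj Hc a(1) by (intro inv_equality) auto
      moreover have "inv h \<otimes> inv (a [^] m) \<in> H" using hj am H by (simp add: subgroup.m_closed subgroup.m_inv_closed)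
      moreover have "m - j < m" using False hj by simp
      ultimately show ?thesis unfolding H'_def by blast
    qed
  next
    fix g1 g2 assume "g1 \<in> H'" "g2 \<in> H'"
    then obtain h1 j1 h2 j2 where hj: "h1 \<in> H" "j1 < m" "g1 = h1 \<otimes> a [^] j1" "h2 \<in> H" "j2 < m" "g2 = h2 \<otimes> a [^] j2"
      unfolding H'_def by blast
    have h12: "h1 \<otimes> h2 \<in> H" using hj H by (simp add: subgroup.m_closed)
    show "g1 \<otimes> g2 \<in> H'"
    proof (cases "j1 + j2 < m")
      case True then show ?thesis unfolding H'_def using hj mult h12 by blast
    next
      case False
      have "h1 \<otimes> h2 \<otimes> a [^] m \<in> H" using h12 am H by (simp add: subgroup.m_closed)
      moreover have "j1 + j2 - m < m" using hj by linarith
      ultimately show ?thesis unfolding H'_def using hj mult wrap[of h1 h2 j1 j2] False by auto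
    qed
  qed
  have lc: "lchar G e H' l'" unfolding lchar_def
  proof (intro ballI)
    fix g1 g2 assume "g1 \<in> H'" "g2 \<in> H'"
    then obtain h1 j1 h2 j2 where hj: "h1 \<in> H" "j1 < m" "g1 = h1 \<otimes> a [^] j1" "h2 \<in> H" "j2 < m" "g2 = h2 \<otimes> a [^] j2"
      unfolding H'_def by blast
    have h12: "h1 \<otimes> h2 \<in> H" using hj H by (simp add: subgroup.m_closed)
    have l12: "l (h1 \<otimes> h2) mod e = (l h1 + l h2) mod e" using l hj unfolding lchar_def by blast
    have lg: "l' g1 + l' g2 = l h1 + l h2 + (j1 + j2) * c" using hj l'_eq by (simp add: algebra_simps)
    show "l' (g1 \<otimes> g2) mod e = (l' g1 + l' g2) mod e"
    proof (cases "j1 + j2 < m")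
      case True
      have "l' (g1 \<otimes> g2) = l (h1 \<otimes> h2) + (j1 + j2) * c" using hj mult h12 l'_eq True by simp
      then show ?thesis using lg l12 by (metis mod_add_left_eq)
    next
      case False
      have h12m: "h1 \<otimes> h2 \<otimes> a [^] m \<in> H" using h12 am H by (simp add: subgroup.m_closed)
      have "l' (g1 \<otimes> g2) = l (h1 \<otimes> h2 \<otimes> a [^] m) + (j1 + j2 - m) * c"
        using hj mult wrap[of h1 h2 j1 j2] False l'_eq h12m by (simp add: less_diff_conv2)
      moreover have "l (h1 \<otimes> h2 \<otimes> a [^] m) mod e = (l h1 + l h2 + m * c) mod e"
      proof -
        have "l (h1 \<otimes> h2 \<otimes> a [^] m) mod e = (l (h1 \<otimes> h2) + l (a [^] m)) mod e"
          using l h12 am unfolding lchar_def by blast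
        also have "\<dots> = ((l h1 + l h2) mod e + (m * c) mod e) mod e" using l12 c by (metis mod_add_eq)
        also have "\<dots> = (l h1 + l h2 + m * c) mod e" by (metis mod_add_eq)
        finally show ?thesis .
      qed
      moreover have "l h1 + l h2 + m * c + (j1 + j2 - m) * c = l h1 + l h2 + (j1 + j2) * c"
      proof -
        obtain d where "j1 + j2 = m + d" using False by (metis le_add_diff_inverse not_less)
        then show ?thesis by (simp add: algebra_simps)
      qed
      ultimately show ?thesis using lg by (metis mod_add_left_eq)
    qed
  qed
  have ext: "\<forall>h\<in>H. l' h mod e = l h mod e"
  proof
    fix h assume h: "h \<in> H"
    have "l' (h \<otimes> a [^] (0::nat)) = l h" using l'_eq[OF h mp(1)] by simp
    then show "l' h mod e = l h mod e" using Hc h by simp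
  qed
  have la: "l' a mod e = c mod e"
  proof -
    have "l' (\<one> \<otimes> a [^] (1::nat)) = l \<one> + c" using l'_eq[OF subgroup.one_closed[OF H] mp(4)] by simp
    then have "l' a = l \<one> + c" using a by simp
    then show ?thesis using lchar_one[OF H l] by (metis add_0 mod_add_left_eq)
  qed
  have "H \<subseteq> H'"
  proof
    fix h assume "h \<in> H"
    then have "h = h \<otimes> a [^] (0::nat) \<and> h \<in> H \<and> (0::nat) < m" using Hc mp(1) by simp
    then show "h \<in> H'" unfolding H'_def by blast
  qed
  moreover have "a \<in> H'"
  proof -
    have "a = \<one> \<otimes> a [^] (1::nat)" using a by simp
    then show ?thesis unfolding H'_def using mp(4) subgroup.one_closed[OF H] by blast
  qed
  ultimately have HH: "H \<subset> H'" "a \<in> H'" using a(2) by blast+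
  show ?thesis
    by (rule exI[where x=H'], rule exI[where x=l'], intro conjI sub lc ext la HH)
qed

end

context expo_grp begin

lemma extend:
  "subgroup H G \<Longrightarrow> lchar G e H l \<Longrightarrow> \<exists>l'. lchar G e (carrier G) l' \<and> (\<forall>h\<in>H. l' h mod e = l h mod e)"
proof (induction "card (carrier G) - card H" arbitrary: H l rule: less_induct)
  case less
  show ?case
  proof (cases "H = carrier G")
    case True then show ?thesis using less.prems(2) by blast
  next
    case False
    then obtain a where a: "a \<in> carrier G" "a \<notin> H" using subgroup.subset[OF less.prems(1)] by blast
    define m :: nat where "m = (LEAST m. 0 < m \<and> a [^] m \<in> H)"
    note mp = least_props[OF less.prems(1) a m_def]
    define L where "L = l (a [^] m)"
    define q where "q = e div m"
    have eq: "e = m * q" using mp(5) q_def by simp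
    have q0: "0 < q" using eq e_pos by (cases q) auto
    have "(q * L) mod e = l ((a [^] m) [^] q) mod e" using lchar_pow[OF less.prems(1,2) mp(2)] L_def by simp
    also have "(a [^] m) [^] q = \<one>" using e_pow a(1) eq by (simp add: nat_pow_pow)
    also have "l \<one> mod e = 0" using lchar_one[OF less.prems] .
    finally have "m * q dvd L * q" using eq by (simp add: mult.commute mod_eq_0_iff_dvd)
    then have "m dvd L" using q0 by simp
    define c where "c = L div m"
    have c: "(m * c) mod e = l (a [^] m) mod e" using \<open>m dvd L\<close> c_def L_def by simp
    obtain H' l' where H': "subgroup H' G" "H \<subset> H'" "lchar G e H' l'" "\<forall>h\<in>H. l' h mod e = l h mod e"
      using step[OF less.prems(1,2) a m_def c] by blast
    have finH': "finite H'" using subgroup.subset[OF H'(1)] fin finite_subset by blast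
    have "card H < card H'" using psubset_card_mono[OF finH' H'(2)] .
    moreover have "card H' \<le> card (carrier G)" using subgroup.subset[OF H'(1)] fin card_mono by blast
    ultimately have "card (carrier G) - card H' < card (carrier G) - card H" by linarith
    then obtain l'' where l'': "lchar G e (carrier G) l''" "\<forall>h\<in>H'. l'' h mod e = l' h mod e"
      using less.hyps[OF _ H'(1) H'(3)] by blast
    have "\<forall>h\<in>H. l'' h mod e = l h mod e" using H'(2,4) l''(2) by auto
    then show ?thesis using l''(1) by blast
  qed
qed

lemma sep_lchar:
  assumes g: "g \<in> carrier G" "g \<noteq> \<one>"
  shows "\<exists>l. lchar G e (carrier G) l \<and> l g mod e \<noteq> 0"
proof -
  have H: "subgroup {\<one>} G" by (rule triv_subgroup)
  have l0: "lchar G e {\<one>} (\<lambda>_. 0)" unfolding lchar_def by simp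
  have a: "g \<notin> {\<one>}" using g by simp
  define m :: nat where "m = (LEAST m. 0 < m \<and> g [^] m \<in> {\<one>})"
  note mp = least_props[OF H g(1) a m_def]
  define c where "c = e div m"
  have eq: "e = m * c" using mp(5) c_def by simp
  have c: "(m * c) mod e = (\<lambda>_. 0::nat) (g [^] m) mod e" using eq by simp
  obtain H' l' where H': "subgroup H' G" "g \<in> H'" "lchar G e H' l'" "l' g mod e = c mod e"
    using step[OF H l0 g(1) a m_def c] by blast
  obtain l'' where l'': "lchar G e (carrier G) l''" "\<forall>h\<in>H'. l'' h mod e = l' h mod e"
    using extend[OF H'(1) H'(3)] by blast
  have "c < e" using c_def mp(4) e_pos by simp
  moreover have "c \<noteq> 0" using eq e_pos by auto
  ultimately have "l'' g mod e \<noteq> 0" using l''(2) H'(2,4) by simp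
  then show ?thesis using l''(1) by blast
qed

end

locale char_setup = expo_grp +
  fixes \<zeta> :: "'o::{idom, ring_char_0}"
  assumes zeta_e: "\<zeta> ^ e = 1" and zeta_prim: "\<And>k. 0 < k \<Longrightarrow> k < e \<Longrightarrow> \<zeta> ^ k \<noteq> 1"
begin

abbreviation X :: "('a \<Rightarrow> 'o) set" where "X \<equiv> characters G"

lemma zeta_mod: "\<zeta> ^ n = \<zeta> ^ (n mod e)"
proof -
  have "\<zeta> ^ n = \<zeta> ^ (e * (n div e) + n mod e)" by simp
  also have "\<dots> = (\<zeta> ^ e) ^ (n div e) * \<zeta> ^ (n mod e)" by (simp only: power_add power_mult)
  finally show ?thesis using zeta_e by simp
qed

lemma chr_in:
  assumes l: "lchar G e (carrier G) l"
  shows "(\<lambda>g. if g \<in> carrier G then \<zeta> ^ l g else 0) \<in> X"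
proof -
  have "l \<one> mod e = 0" using lchar_one[OF subgroup_self l] .
  then have one: "\<zeta> ^ l \<one> = 1" using zeta_mod[of "l \<one>"] by simp
  have mult: "\<zeta> ^ l (g \<otimes> h) = \<zeta> ^ l g * \<zeta> ^ l h" if "g \<in> carrier G" "h \<in> carrier G" for g h
  proof -
    have "\<zeta> ^ l (g \<otimes> h) = \<zeta> ^ (l (g \<otimes> h) mod e)" by (rule zeta_mod)
    also have "\<dots> = \<zeta> ^ ((l g + l h) mod e)" using l that unfolding lchar_def by simp
    also have "\<dots> = \<zeta> ^ (l g + l h)" using zeta_mod[of "l g + l h"] by simp
    finally show ?thesis by (simp add: power_add)
  qed
  show ?thesis unfolding characters_def using one mult by auto
qed

lemma sep_char:
  assumes g: "g \<in> carrier G" "g \<noteq> \<one>"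
  shows "\<exists>\<psi>\<in>X. \<psi> g \<noteq> 1"
proof -
  obtain l where l: "lchar G e (carrier G) l" "l g mod e \<noteq> 0" using sep_lchar[OF g] by blast
  have "\<zeta> ^ l g \<noteq> 1" using zeta_mod[of "l g"] zeta_prim[of "l g mod e"] l(2) e_pos by simp
  then have "(\<lambda>g. if g \<in> carrier G then \<zeta> ^ l g else 0) g \<noteq> 1" using g(1) by simp
  then show ?thesis by (rule bexI[OF _ chr_in[OF l(1)]])
qed

lemma char_props:
  assumes "\<psi> \<in> X"
  shows "\<psi> \<one> = 1" "\<And>g h. g \<in> carrier G \<Longrightarrow> h \<in> carrier G \<Longrightarrow> \<psi> (g \<otimes> h) = \<psi> g * \<psi> h"
    "\<And>g. g \<notin> carrier G \<Longrightarrow> \<psi> g = 0"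
proof -
  have *: "\<psi> \<one> = 1 \<and> (\<forall>g\<in>carrier G. \<forall>h\<in>carrier G. \<psi> (g \<otimes> h) = \<psi> g * \<psi> h) \<and> (\<forall>g. g \<notin> carrier G \<longrightarrow> \<psi> g = 0)"
    using assms unfolding characters_def by simp
  show "\<psi> \<one> = 1" using * by simp
  show "\<And>g h. g \<in> carrier G \<Longrightarrow> h \<in> carrier G \<Longrightarrow> \<psi> (g \<otimes> h) = \<psi> g * \<psi> h" using * by simp
  show "\<And>g. g \<notin> carrier G \<Longrightarrow> \<psi> g = 0" using * by simp
qed

lemma char_pow:
  assumes "\<psi> \<in> X" "g \<in> carrier G" shows "\<psi> (g [^] (n::nat)) = \<psi> g ^ n"
  using assms by (induction n) (simp_all add: char_props)

lemma char_e: assumes "\<psi> \<in> X" "g \<in> carrier G" shows "\<psi> g ^ e = 1"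
  using char_pow[OF assms, of e] e_pow[OF assms(2)] char_props(1)[OF assms(1)] by simp

lemma char_inv: assumes "\<psi> \<in> X" "g \<in> carrier G" shows "\<psi> (inv g) * \<psi> g = 1"
  using char_props(2)[OF assms(1) inv_closed[OF assms(2)] assms(2)] char_props(1)[OF assms(1)] assms(2) by simp

lemma finite_roots: "finite {z::'o. z ^ e = 1}"
proof -
  have ne: "monom 1 e - 1 \<noteq> (0::'o poly)"
  proof
    assume "monom 1 e - 1 = (0::'o poly)"
    then have "coeff (monom 1 e - 1) e = (0::'o)" by simp
    then show False using e_pos by simp
  qed
  have "{z::'o. z ^ e = 1} = {z. poly (monom 1 e - 1) z = 0}" by (simp add: poly_monom)
  then show ?thesis using poly_roots_finite[OF ne] by simp
qed

lemma finite_X: "finite X"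
proof -
  let ?R = "insert 0 {z::'o. z ^ e = 1}"
  have "X \<subseteq> {f. \<forall>x. (x \<in> carrier G \<longrightarrow> f x \<in> ?R) \<and> (x \<notin> carrier G \<longrightarrow> f x = 0)}"
  proof
    fix \<psi> assume p: "\<psi> \<in> X"
    show "\<psi> \<in> {f. \<forall>x. (x \<in> carrier G \<longrightarrow> f x \<in> ?R) \<and> (x \<notin> carrier G \<longrightarrow> f x = 0)}"
      using char_e[OF p] char_props(3)[OF p] by simp
  qed
  moreover have "finite {f. \<forall>x. (x \<in> carrier G \<longrightarrow> f x \<in> ?R) \<and> (x \<notin> carrier G \<longrightarrow> f x = (0::'o))}"
    by (rule finite_set_of_finite_funs[OF fin]) (use finite_roots in simp)
  ultimately show ?thesis using finite_subset by blast
qed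

lemma triv_in_X: "(\<lambda>g. if g \<in> carrier G then 1 else 0) \<in> X"
  unfolding characters_def by auto

lemma mult_in_X: assumes "\<psi>0 \<in> X" "\<psi> \<in> X" shows "(\<lambda>g. \<psi>0 g * \<psi> g) \<in> X"
  using char_props[OF assms(1)] char_props[OF assms(2)] unfolding characters_def by (auto simp: algebra_simps)

lemma invc_in_X: assumes "\<psi>0 \<in> X" shows "(\<lambda>g. if g \<in> carrier G then \<psi>0 (inv g) else 0) \<in> X"
  using char_props[OF assms(1)] unfolding characters_def by (auto simp: inv_mult)

lemma sum_shift_X:
  assumes "\<psi>0 \<in> X" shows "(\<Sum>\<psi>\<in>X. \<psi> g) = (\<Sum>\<psi>\<in>X. \<psi>0 g * \<psi> g)"
proof -
  define f where "f = (\<lambda>\<psi> (g::'a). \<psi>0 g * \<psi> g)"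
  define f' where "f' = (\<lambda>\<psi> g. (if g \<in> carrier G then \<psi>0 (inv g) else 0) * \<psi> g)"
  have b: "bij_betw f X X"
  proof (rule bij_betw_byWitness[where f'=f'])
    show "\<forall>a\<in>X. f' (f a) = a"
    proof
      fix \<psi> assume p: "\<psi> \<in> X"
      show "f' (f \<psi>) = \<psi>"
      proof
        fix g show "f' (f \<psi>) g = \<psi> g"
          using char_inv[OF assms, of g] char_props(3)[OF p, of g] unfolding f_def f'_def
          by (cases "g \<in> carrier G") (simp_all add: mult.assoc[symmetric])
      qed
    qed
    show "\<forall>a\<in>X. f (f' a) = a"
    proof
      fix \<psi> assume p: "\<psi> \<in> X"
      show "f (f' \<psi>) = \<psi>"
      proof
        fix g show "f (f' \<psi>) g = \<psi> g"
          using char_inv[OF assms, of g] char_props(3)[OF p, of g] unfolding f_def f'_def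
          by (cases "g \<in> carrier G") (simp_all add: mult.assoc[symmetric] mult.commute)
      qed
    qed
    show "f ` X \<subseteq> X" unfolding f_def using mult_in_X[OF assms] by blast
    show "f' ` X \<subseteq> X" unfolding f'_def using mult_in_X[OF invc_in_X[OF assms]] by blast
  qed
  have "(\<Sum>\<psi>\<in>X. \<psi>0 g * \<psi> g) = (\<Sum>\<psi>\<in>X. (\<lambda>\<psi>. \<psi> g) (f \<psi>))" unfolding f_def by simp
  also have "\<dots> = (\<Sum>\<psi>\<in>X. \<psi> g)" by (rule sum.reindex_bij_betw[OF b])
  finally show ?thesis by simp
qed

lemma orth:
  assumes g: "g \<in> carrier G" "g \<noteq> \<one>" shows "(\<Sum>\<psi>\<in>X. \<psi> g) = 0"
proof -
  obtain \<psi>0 where p: "\<psi>0 \<in> X" "\<psi>0 g \<noteq> 1" using sep_char[OF g] by blast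
  have "(\<Sum>\<psi>\<in>X. \<psi> g) = (\<Sum>\<psi>\<in>X. \<psi>0 g * \<psi> g)" by (rule sum_shift_X[OF p(1)])
  also have "\<dots> = \<psi>0 g * (\<Sum>\<psi>\<in>X. \<psi> g)" by (simp add: sum_distrib_left)
  finally have "(\<Sum>\<psi>\<in>X. \<psi> g) = \<psi>0 g * (\<Sum>\<psi>\<in>X. \<psi> g)" .
  then have "(1 - \<psi>0 g) * (\<Sum>\<psi>\<in>X. \<psi> g) = 0" by (simp add: algebra_simps)
  then show ?thesis using p(2) by simp
qed

lemma sum_one: "(\<Sum>\<psi>\<in>X. \<psi> \<one>) = of_nat (card X)" and card_X_nz: "(of_nat (card X) :: 'o) \<noteq> 0"
proof -
  have "(\<Sum>\<psi>\<in>X. \<psi> \<one>) = (\<Sum>\<psi>\<in>X. (1::'o))" by (rule sum.cong) (simp_all add: char_props(1))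
  then show "(\<Sum>\<psi>\<in>X. \<psi> \<one>) = of_nat (card X)" by simp
  have "X \<noteq> {}" using triv_in_X by blast
  then have "card X \<noteq> 0" using finite_X by simp
  then show "(of_nat (card X) :: 'o) \<noteq> 0" by simp
qed

lemma separation:
  assumes y: "y \<in> group_ring G" and z: "\<forall>\<psi>\<in>X. char_eval G \<psi> y = 0"
  shows "y = (\<lambda>_. 0)"
proof
  fix g0
  show "y g0 = 0"
  proof (cases "g0 \<in> carrier G")
    case False then show ?thesis using y unfolding group_ring_def by simp
  next
    case True
    have "0 = (\<Sum>\<psi>\<in>X. \<psi> (inv g0) * char_eval G \<psi> y)" using z by simp
    also have "\<dots> = (\<Sum>\<psi>\<in>X. \<Sum>g\<in>carrier G. y g * (\<psi> (inv g0) * \<psi> g))"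
      unfolding char_eval_def by (simp add: sum_distrib_left algebra_simps)
    also have "\<dots> = (\<Sum>g\<in>carrier G. \<Sum>\<psi>\<in>X. y g * (\<psi> (inv g0) * \<psi> g))" by (rule sum.swap)
    also have "\<dots> = (\<Sum>g\<in>carrier G. y g * (\<Sum>\<psi>\<in>X. \<psi> (inv g0 \<otimes> g)))"
      by (intro sum.cong refl) (simp add: sum_distrib_left char_props True)
    also have "\<dots> = (\<Sum>g\<in>carrier G. if g = g0 then y g * of_nat (card X) else 0)"
    proof (intro sum.cong refl)
      fix g assume g: "g \<in> carrier G"
      show "y g * (\<Sum>\<psi>\<in>X. \<psi> (inv g0 \<otimes> g)) = (if g = g0 then y g * of_nat (card X) else 0)"
      proof (cases "g = g0")
        case True then show ?thesis using sum_one g by simp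
      next
        case False
        then have "inv g0 \<otimes> g \<noteq> \<one>" using inv_solve_left'[of \<one> g0 g] g True by simp
        then show ?thesis using orth[of "inv g0 \<otimes> g"] g True False by simp
      qed
    qed
    also have "\<dots> = y g0 * of_nat (card X)" using True fin by (simp add: sum.delta)
    finally show ?thesis using card_X_nz by simp
  qed
qed

end

context char_setup begin

lemma reindex_carrier:
  assumes h: "h \<in> carrier G" shows "(\<Sum>g\<in>carrier G. f (h \<otimes> g)) = (\<Sum>g\<in>carrier G. f g)"
proof -
  have "(\<lambda>g. h \<otimes> g) ` carrier G = carrier G"
  proof
    show "(\<lambda>g. h \<otimes> g) ` carrier G \<subseteq> carrier G" using h by auto
    show "carrier G \<subseteq> (\<lambda>g. h \<otimes> g) ` carrier G"
    proof
      fix g assume g: "g \<in> carrier G"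
      have "g = h \<otimes> (inv h \<otimes> g)" using h g by (simp add: m_assoc[symmetric])
      moreover have "inv h \<otimes> g \<in> carrier G" using h g by simp
      ultimately show "g \<in> (\<lambda>g. h \<otimes> g) ` carrier G" by (rule image_eqI)
    qed
  qed
  then have "(\<Sum>g\<in>carrier G. f g) = (\<Sum>g\<in>(\<lambda>g. h \<otimes> g) ` carrier G. f g)" by simp
  also have "\<dots> = (\<Sum>g\<in>carrier G. f (h \<otimes> g))"
    using sum.reindex[OF inj_on_cmult[OF h], of f] by (simp add: comp_def)
  finally show ?thesis by simp
qed

lemma reindex_sub:
  assumes I: "subgroup I G" and h: "h \<in> I" shows "(\<Sum>g\<in>I. f (h \<otimes> g)) = (\<Sum>g\<in>I. f g)"
proof -
  have Ic: "I \<subseteq> carrier G" using subgroup.subset[OF I] .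
  have hc: "h \<in> carrier G" using h Ic by blast
  have "(\<lambda>g. h \<otimes> g) ` I = I"
  proof
    show "(\<lambda>g. h \<otimes> g) ` I \<subseteq> I" using h I by (auto simp: subgroup.m_closed)
    show "I \<subseteq> (\<lambda>g. h \<otimes> g) ` I"
    proof
      fix g assume g: "g \<in> I"
      have gc: "g \<in> carrier G" using g Ic by blast
      have "g = h \<otimes> (inv h \<otimes> g)" using hc gc by (simp add: m_assoc[symmetric])
      moreover have "inv h \<otimes> g \<in> I" using h g I by (simp add: subgroup.m_closed subgroup.m_inv_closed)
      ultimately show "g \<in> (\<lambda>g. h \<otimes> g) ` I" by (rule image_eqI)
    qed
  qed
  moreover have "inj_on (\<lambda>g. h \<otimes> g) I" using inj_on_subset[OF inj_on_cmult[OF hc] Ic] .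
  ultimately show ?thesis using sum.reindex[of "\<lambda>g. h \<otimes> g" I f] by (simp add: comp_def)
qed

lemma char_eval_mult:
  assumes p: "\<psi> \<in> X"
  shows "char_eval G \<psi> (gr_mult G x z) = char_eval G \<psi> x * char_eval G \<psi> z"
proof -
  have "char_eval G \<psi> (gr_mult G x z) = (\<Sum>g\<in>carrier G. \<Sum>h\<in>carrier G. x h * z (inv h \<otimes> g) * \<psi> g)"
    unfolding char_eval_def gr_mult_def by (rule sum.cong[OF refl]) (simp add: sum_distrib_right)
  also have "\<dots> = (\<Sum>h\<in>carrier G. \<Sum>g\<in>carrier G. x h * z (inv h \<otimes> g) * \<psi> g)" by (rule sum.swap)
  also have "\<dots> = (\<Sum>h\<in>carrier G. x h * \<psi> h * char_eval G \<psi> z)"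
  proof (rule sum.cong[OF refl])
    fix h assume h: "h \<in> carrier G"
    have "(\<Sum>g\<in>carrier G. x h * z (inv h \<otimes> g) * \<psi> g)
        = (\<Sum>g\<in>carrier G. x h * z (inv h \<otimes> (h \<otimes> g)) * \<psi> (h \<otimes> g))"
      by (rule reindex_carrier[OF h, symmetric])
    also have "\<dots> = (\<Sum>g\<in>carrier G. x h * \<psi> h * (z g * \<psi> g))"
    proof (rule sum.cong[OF refl])
      fix g assume g: "g \<in> carrier G"
      have "inv h \<otimes> (h \<otimes> g) = g" using h g by (simp add: m_assoc[symmetric])
      then show "x h * z (inv h \<otimes> (h \<otimes> g)) * \<psi> (h \<otimes> g) = x h * \<psi> h * (z g * \<psi> g)"
        using char_props(2)[OF p h g] by (simp add: algebra_simps)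
    qed
    also have "\<dots> = x h * \<psi> h * char_eval G \<psi> z" unfolding char_eval_def by (simp add: sum_distrib_left)
    finally show "(\<Sum>g\<in>carrier G. x h * z (inv h \<otimes> g) * \<psi> g) = x h * \<psi> h * char_eval G \<psi> z" .
  qed
  also have "\<dots> = char_eval G \<psi> x * char_eval G \<psi> z" unfolding char_eval_def by (simp add: sum_distrib_right)
  finally show ?thesis .
qed

lemma norm_zero:
  assumes I: "subgroup I G" and p: "\<psi> \<in> X" and h0: "h0 \<in> I" "\<psi> h0 \<noteq> 1"
  shows "char_eval G \<psi> (norm_elem I) = 0"
proof -
  have Ic: "I \<subseteq> carrier G" using subgroup.subset[OF I] .
  have "char_eval G \<psi> (norm_elem I) = (\<Sum>g\<in>carrier G. if g \<in> I then \<psi> g else 0)"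
    unfolding char_eval_def norm_elem_def by (rule sum.cong[OF refl]) simp
  also have "\<dots> = (\<Sum>g\<in>carrier G \<inter> I. \<psi> g)" using sum.inter_restrict[OF fin, of \<psi> I] by simp
  also have "carrier G \<inter> I = I" using Ic by blast
  finally have S: "char_eval G \<psi> (norm_elem I) = (\<Sum>g\<in>I. \<psi> g)" .
  have "(\<Sum>g\<in>I. \<psi> g) = (\<Sum>g\<in>I. \<psi> (h0 \<otimes> g))" by (rule reindex_sub[OF I h0(1), symmetric])
  also have "\<dots> = (\<Sum>g\<in>I. \<psi> h0 * \<psi> g)"
    by (rule sum.cong[OF refl]) (use h0(1) Ic char_props(2)[OF p] in blast)
  also have "\<dots> = \<psi> h0 * (\<Sum>g\<in>I. \<psi> g)" by (simp add: sum_distrib_left)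
  finally have "(1 - \<psi> h0) * (\<Sum>g\<in>I. \<psi> g) = 0" by (simp add: algebra_simps)
  then show ?thesis using S h0(2) by simp
qed

lemma kernel_invariant:
  assumes I: "subgroup I G" and x: "x \<in> char_kernel G {\<psi> \<in> X. \<exists>h\<in>I. \<psi> h \<noteq> 1}"
    and h: "h \<in> I" and g: "g \<in> carrier G"
  shows "x (inv h \<otimes> g) = x g"
proof -
  have Ic: "I \<subseteq> carrier G" using subgroup.subset[OF I] .
  have hc: "h \<in> carrier G" using h Ic by blast
  have xg: "x \<in> group_ring G" and xk: "\<And>\<psi>. \<psi> \<in> X \<Longrightarrow> \<exists>h\<in>I. \<psi> h \<noteq> 1 \<Longrightarrow> char_eval G \<psi> x = 0"
    using x unfolding char_kernel_def by auto
  define y where "y = (\<lambda>g. if g \<in> carrier G then x (inv h \<otimes> g) - x g else 0)"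
  have yg: "y \<in> group_ring G" unfolding y_def group_ring_def by simp
  have "\<forall>\<psi>\<in>X. char_eval G \<psi> y = 0"
  proof
    fix \<psi> assume p: "\<psi> \<in> X"
    have "char_eval G \<psi> y = (\<Sum>g\<in>carrier G. x (inv h \<otimes> g) * \<psi> g) - char_eval G \<psi> x"
      unfolding char_eval_def y_def
      by (simp add: sum_subtractf[symmetric] left_diff_distrib cong: sum.cong)
    also have "(\<Sum>g\<in>carrier G. x (inv h \<otimes> g) * \<psi> g) = (\<Sum>g\<in>carrier G. x (inv h \<otimes> (h \<otimes> g)) * \<psi> (h \<otimes> g))"
      by (rule reindex_carrier[OF hc, symmetric])
    also have "\<dots> = (\<Sum>g\<in>carrier G. \<psi> h * (x g * \<psi> g))"
    proof (rule sum.cong[OF refl])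
      fix g assume g: "g \<in> carrier G"
      have "inv h \<otimes> (h \<otimes> g) = g" using hc g by (simp add: m_assoc[symmetric])
      then show "x (inv h \<otimes> (h \<otimes> g)) * \<psi> (h \<otimes> g) = \<psi> h * (x g * \<psi> g)"
        using char_props(2)[OF p hc g] by (simp add: algebra_simps)
    qed
    also have "\<dots> = \<psi> h * char_eval G \<psi> x" unfolding char_eval_def by (simp add: sum_distrib_left)
    finally have ce: "char_eval G \<psi> y = (\<psi> h - 1) * char_eval G \<psi> x" by (simp add: algebra_simps)
    show "char_eval G \<psi> y = 0"
    proof (cases "\<psi> h = 1")
      case True then show ?thesis using ce by simp
    next
      case False then show ?thesis using ce xk[OF p] h by auto
    qed
  qed
  then have "y = (\<lambda>_. 0)" by (rule separation[OF yg])
  then have "y g = 0" by simp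
  then show ?thesis using g unfolding y_def by simp
qed

lemma main:
  assumes I: "subgroup I G"
  shows "char_kernel G {\<psi> \<in> X. \<exists>h\<in>I. \<psi> h \<noteq> 1} = gr_principal_ideal G (norm_elem I :: 'a \<Rightarrow> 'o)"
proof
  have Ic: "I \<subseteq> carrier G" using subgroup.subset[OF I] .
  show "gr_principal_ideal G (norm_elem I) \<subseteq> char_kernel G {\<psi> \<in> X. \<exists>h\<in>I. \<psi> h \<noteq> 1}"
  proof
    fix x assume "x \<in> gr_principal_ideal G (norm_elem I :: 'a \<Rightarrow> 'o)"
    then obtain y where y: "y \<in> group_ring G" "x = gr_mult G y (norm_elem I)"
      unfolding gr_principal_ideal_def by blast
    have "x \<in> group_ring G" unfolding y(2) group_ring_def gr_mult_def by simp
    moreover have "\<forall>\<psi>\<in>{\<psi> \<in> X. \<exists>h\<in>I. \<psi> h \<noteq> 1}. char_eval G \<psi> x = 0"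
    proof
      fix \<psi> assume "\<psi> \<in> {\<psi> \<in> X. \<exists>h\<in>I. \<psi> h \<noteq> 1}"
      then obtain h0 where p: "\<psi> \<in> X" "h0 \<in> I" "\<psi> h0 \<noteq> 1" by blast
      show "char_eval G \<psi> x = 0" unfolding y(2) char_eval_mult[OF p(1)] norm_zero[OF I p] by simp
    qed
    ultimately show "x \<in> char_kernel G {\<psi> \<in> X. \<exists>h\<in>I. \<psi> h \<noteq> 1}" unfolding char_kernel_def by blast
  qed
  show "char_kernel G {\<psi> \<in> X. \<exists>h\<in>I. \<psi> h \<noteq> 1} \<subseteq> gr_principal_ideal G (norm_elem I)"
  proof
    fix x assume x: "x \<in> char_kernel G {\<psi> \<in> X. \<exists>h\<in>I. \<psi> h \<noteq> 1}"
    have xg: "x \<in> group_ring G" using x unfolding char_kernel_def by blast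
    have inv1: "x (h \<otimes> g) = x g" if "h \<in> I" "g \<in> carrier G" for h g
    proof -
      have "inv h \<in> I" using that(1) I by (simp add: subgroup.m_inv_closed)
      moreover have "inv (inv h) = h" using that(1) Ic by auto
      ultimately show ?thesis using kernel_invariant[OF I x _ that(2), of "inv h"] by simp
    qed
    define cs where "cs g = (\<lambda>i. i \<otimes> g) ` I" for g
    define rep where "rep g = (SOME r. r \<in> cs g)" for g
    have cs_self: "g \<in> cs g" if "g \<in> carrier G" for g
    proof -
      have "g = \<one> \<otimes> g" using that by simp
      then show ?thesis unfolding cs_def using subgroup.one_closed[OF I] by blast
    qed
    have rep_in: "rep g \<in> cs g" if "g \<in> carrier G" for g
      unfolding rep_def using cs_self[OF that] by (rule someI)
    have cs_c: "cs g \<subseteq> carrier G" if "g \<in> carrier G" for g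
      unfolding cs_def using that Ic by auto
    have cs_eq: "cs g' = cs g" if g: "g \<in> carrier G" and g': "g' \<in> cs g" for g g'
    proof -
      obtain i where i: "i \<in> I" "g' = i \<otimes> g" using g' unfolding cs_def by blast
      have ic: "i \<in> carrier G" using i Ic by blast
      show ?thesis
      proof
        show "cs g' \<subseteq> cs g"
        proof
          fix k assume "k \<in> cs g'"
          then obtain j where j: "j \<in> I" "k = j \<otimes> g'" unfolding cs_def by blast
          have "k = (j \<otimes> i) \<otimes> g" using j i ic g Ic by (simp add: m_assoc subset_iff)
          moreover have "j \<otimes> i \<in> I" using i j I by (simp add: subgroup.m_closed)
          ultimately show "k \<in> cs g" unfolding cs_def by blast
        qed
        show "cs g \<subseteq> cs g'"
        proof
          fix k assume "k \<in> cs g"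
          then obtain j where j: "j \<in> I" "k = j \<otimes> g" unfolding cs_def by blast
          have jc: "j \<in> carrier G" using j Ic by blast
          have aux: "inv i \<otimes> (i \<otimes> g) = g" using ic g by (simp add: m_assoc[symmetric])
          have "(j \<otimes> inv i) \<otimes> g' = j \<otimes> g" using i(2) aux ic jc g by (simp add: m_assoc)
          then have "k = (j \<otimes> inv i) \<otimes> g'" using j ic jc g by simp
          moreover have "j \<otimes> inv i \<in> I" using i j I by (simp add: subgroup.m_closed subgroup.m_inv_closed)
          ultimately show "k \<in> cs g'" unfolding cs_def by blast
        qed
      qed
    qed
    have x_rep: "x (rep g) = x g" if g: "g \<in> carrier G" for g
    proof -
      obtain i where "i \<in> I" "rep g = i \<otimes> g" using rep_in[OF g] unfolding cs_def by blast
      then show ?thesis using inv1 g by simp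
    qed
    have mem_iff: "(inv h \<otimes> g \<in> I) = (h \<in> cs g)" if h: "h \<in> carrier G" and g: "g \<in> carrier G" for h g
    proof
      assume a: "inv h \<otimes> g \<in> I"
      define i where "i = inv h \<otimes> g"
      have ic: "i \<in> carrier G" using i_def h g by simp
      have "g = h \<otimes> i" using i_def h g by (simp add: m_assoc[symmetric])
      moreover have "inv i \<otimes> (h \<otimes> i) = h" using h ic by (simp add: m_comm[of h i] m_assoc[symmetric])
      ultimately have "h = inv i \<otimes> g" by simp
      moreover have "inv i \<in> I" using a i_def I by (simp add: subgroup.m_inv_closed)
      ultimately show "h \<in> cs g" unfolding cs_def by blast
    next
      assume "h \<in> cs g"
      then obtain i where i: "i \<in> I" "h = i \<otimes> g" unfolding cs_def by blast
      have ic: "i \<in> carrier G" using i Ic by blast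
      have "inv h \<otimes> g = inv i" using i ic g by (simp add: inv_mult m_assoc)
      then show "inv h \<otimes> g \<in> I" using i I by (simp add: subgroup.m_inv_closed)
    qed
    define y where "y = (\<lambda>g. if g \<in> carrier G \<and> rep g = g then x g else 0)"
    have yg: "y \<in> group_ring G" unfolding y_def group_ring_def by simp
    have "x = gr_mult G y (norm_elem I)"
    proof
      fix g
      show "x g = gr_mult G y (norm_elem I) g"
      proof (cases "g \<in> carrier G")
        case False then show ?thesis using xg unfolding group_ring_def gr_mult_def by simp
      next
        case True
        have "gr_mult G y (norm_elem I) g = (\<Sum>h\<in>carrier G. y h * norm_elem I (inv h \<otimes> g))"
          unfolding gr_mult_def using True by simp
        also have "\<dots> = (\<Sum>h\<in>carrier G. if h = rep g then x (rep g) else 0)"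
        proof (rule sum.cong[OF refl])
          fix h assume h: "h \<in> carrier G"
          show "y h * norm_elem I (inv h \<otimes> g) = (if h = rep g then x (rep g) else 0)"
          proof (cases "h \<in> cs g")
            case True
            have "rep h = rep g" unfolding rep_def using cs_eq[OF \<open>g \<in> carrier G\<close> True] by simp
            then show ?thesis using True mem_iff[OF h \<open>g \<in> carrier G\<close>] h
              unfolding y_def norm_elem_def by auto
          next
            case False
            then have "h \<noteq> rep g" using rep_in[OF \<open>g \<in> carrier G\<close>] by blast
            then show ?thesis using False mem_iff[OF h \<open>g \<in> carrier G\<close>]
              unfolding norm_elem_def by simp
          qed
        qed
        also have "\<dots> = x (rep g)" using fin rep_in[OF True] cs_c[OF True] by (auto simp: sum.delta)
        also have "\<dots> = x g" using x_rep[OF True] .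
        finally show ?thesis by simp
      qed
    qed
    then show "x \<in> gr_principal_ideal G (norm_elem I)" unfolding gr_principal_ideal_def using yg by blast
  qed
qed

end

theorem lemma2p2:
  fixes G :: "('g, 'b) monoid_scheme" and I :: "'g set"
    and p :: nat
  assumes "comm_group G" and "finite (carrier G)"
    and "prime p" and "odd p"
    and "\<exists>\<zeta>::'o::{idom, ring_char_0}. \<zeta> ^ group_exponent G = 1 \<and>
           (\<forall>k. 0 < k \<and> k < group_exponent G \<longrightarrow> \<zeta> ^ k \<noteq> 1)"
    and "subgroup I G"
  shows "char_kernel G {\<psi> \<in> characters G. \<exists>h\<in>I. \<psi> h \<noteq> (1::'o)}
           = gr_principal_ideal G (norm_elem I)"
proof -
  interpret cg: comm_group G by (rule assms(1))
  define e where "e = group_exponent G"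
  have cpos: "0 < card (carrier G)" using assms(2) cg.one_closed card_gt_0_iff by blast
  have ex: "0 < card (carrier G) \<and> (\<forall>g\<in>carrier G. g [^]\<^bsub>G\<^esub> card (carrier G) = \<one>\<^bsub>G\<^esub>)"
    using cpos cg.power_order_eq_one[OF assms(2)] by blast
  have e: "0 < e \<and> (\<forall>g\<in>carrier G. g [^]\<^bsub>G\<^esub> e = \<one>\<^bsub>G\<^esub>)"
    unfolding e_def group_exponent_def by (rule LeastI[of _ "card (carrier G)"]) (rule ex)
  obtain \<zeta> :: 'o where z: "\<zeta> ^ e = 1" "\<And>k. 0 < k \<Longrightarrow> k < e \<Longrightarrow> \<zeta> ^ k \<noteq> 1"
    using assms(5) unfolding e_def by blast
  interpret cs: char_setup G e \<zeta>
    by unfold_locales (use assms(2) e z in auto)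
  show ?thesis by (rule cs.main[OF assms(6)])
qed

end
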